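(* Let $W\in L^\infty$ and $(X_t)_{t\in\mathbb{T}}\in\mathcal{A}(W)$. Then $(X_t)$ is Pareto optimal if and only if there exists $(\lambda_1,\dots,\lambda_T)\in(0,\infty)^T$ such that $(\lambda_t u_t'(\tilde X_t))_{t\in\mathbb{T}}$ is an $(\mathcal{F}_t)$-martingale.
   Context: Let $T\ge 1$ be an integer and $\mathbb{T}=\{1,\dots,T\}$. Let $(\Omega,\mathcal{F},(\mathcal{F}_t)_{t\in\{0,1,\dots,T\}},P)$ be a filtered probability space and $L^{\infty}=L^{\infty}(\Omega,\mathcal{F}_T,P)$. Let $(r_t)_{t\in\mathbb{T}}$ be a bounded, nonnegative, predictable process ($r_t$ is $\mathcal{F}_{t-1}$-measurable), $B_0=1$, $B_t=\prod_{k=1}^t(1+r_k)$, and for a process $(X_t)$ write $\tilde X_t=X_t/B_t$. For $W\in L^\infty$, $\mathcal{A}(W)$ is the set of $(\mathcal{F}_t)$-adapted processes $(Y_t)_{t\in\mathbb{T}}$ with $Y_t\in L^\infty$ for all $t$ and $\sum_{t\in\mathbb{T}}\tilde Y_t=W$ a.s. For each $t\in\mathbb{T}$, $u_t:\mathbb{R}\to\mathbb{R}$ is strictly concave, $C^1$, with $u_t'(x)>0$ for all $x$. An allocation $(X_t)\in\mathcal{A}(W)$ is Pareto optimal if there is no $(Y_t)\in\mathcal{A}(W)$ with $E[u_t(\tilde Y_t)]\ge E[u_t(\tilde X_t)]$ for all $t\in\mathbb{T}$ and $E[u_{t_0}(\tilde Y_{t_0})]>E[u_{t_0}(\tilde X_{t_0})]$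 for at least one $t_0\in\mathbb{T}$. *)

theory Defs
  imports "HOL-Probability.Probability"
begin

definition strictly_concave_on :: "real set \<Rightarrow> (real \<Rightarrow> real) \<Rightarrow> bool" where
  "strictly_concave_on S f \<longleftrightarrow> convex S \<and>
     (\<forall>x\<in>S. \<forall>y\<in>S. \<forall>a::real. x \<noteq> y \<longrightarrow> 0 < a \<longrightarrow> a < 1 \<longrightarrow>
        f (a * x + (1 - a) * y) > a * f x + (1 - a) * f y)"

definition filtration_upto :: "'a measure \<Rightarrow> (nat \<Rightarrow> 'a measure) \<Rightarrow> nat \<Rightarrow> bool" where
  "filtration_upto M F T \<longleftrightarrow>
     (\<forall>t\<le>T. subalgebra M (F t)) \<and> (\<forall>s t. s \<le> t \<longrightarrow> t \<le> T \<longrightarrow> sets (F s) \<subseteq> sets (F t))"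

definition Linfty :: "'a measure \<Rightarrow> 'a measure \<Rightarrow> ('a \<Rightarrow> real) \<Rightarrow> bool" where
  "Linfty M G X \<longleftrightarrow> X \<in> borel_measurable G \<and> (\<exists>C. AE x in M. \<bar>X x\<bar> \<le> C)"

definition disc :: "(nat \<Rightarrow> 'a \<Rightarrow> real) \<Rightarrow> nat \<Rightarrow> 'a \<Rightarrow> real" where
  "disc r t x = (\<Prod>k\<in>{1..t}. 1 + r k x)"

definition allocations :: "'a measure \<Rightarrow> (nat \<Rightarrow> 'a measure) \<Rightarrow> nat \<Rightarrow> (nat \<Rightarrow> 'a \<Rightarrow> real)
    \<Rightarrow> ('a \<Rightarrow> real) \<Rightarrow> (nat \<Rightarrow> 'a \<Rightarrow> real) set" where
  "allocations M F T r W = {Y. (\<forall>t\<in>{1..T}. Linfty M (F t) (Y t)) \<and>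
      (AE x in M. (\<Sum>t\<in>{1..T}. Y t x / disc r t x) = W x)}"

definition pareto_optimal :: "'a measure \<Rightarrow> (nat \<Rightarrow> 'a measure) \<Rightarrow> nat \<Rightarrow> (nat \<Rightarrow> 'a \<Rightarrow> real)
    \<Rightarrow> (nat \<Rightarrow> real \<Rightarrow> real) \<Rightarrow> ('a \<Rightarrow> real) \<Rightarrow> (nat \<Rightarrow> 'a \<Rightarrow> real) \<Rightarrow> bool" where
  "pareto_optimal M F T r u W X \<longleftrightarrow> X \<in> allocations M F T r W \<and>
     \<not> (\<exists>Y \<in> allocations M F T r W.
          (\<forall>t\<in>{1..T}. (\<integral>x. u t (Y t x / disc r t x) \<partial>M) \<ge> (\<integral>x. u t (X t x / disc r t x) \<partial>M)) \<and>
          (\<exists>t0\<in>{1..T}. (\<integral>x. u t0 (Y t0 x / disc r t0 x) \<partial>M) > (\<integral>x. u t0 (X t0 x / disc r t0 x) \<partial>M)))"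

definition martingale_upto :: "'a measure \<Rightarrow> (nat \<Rightarrow> 'a measure) \<Rightarrow> nat \<Rightarrow> (nat \<Rightarrow> 'a \<Rightarrow> real) \<Rightarrow> bool" where
  "martingale_upto M F T Z \<longleftrightarrow>
     (\<forall>t\<in>{1..T}. integrable M (Z t) \<and> Z t \<in> borel_measurable (F t)) \<and>
     (\<forall>s\<in>{1..T}. \<forall>t\<in>{1..T}. s \<le> t \<longrightarrow> (AE x in M. real_cond_exp M (F s) (Z t) x = Z s x))"

end

theory Submission
  imports Defs
begin


lemma Linfty_add: "Linfty M G f \<Longrightarrow> Linfty M G g \<Longrightarrow> Linfty M G (\<lambda>x. f x + g x)"
  unfolding Linfty_def
proof (elim conjE exE, intro conjI)
  fix C1 C2 assume "f \<in> borel_measurable G" "g \<in> borel_measurable G"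
    "AE x in M. \<bar>f x\<bar> \<le> C1" "AE x in M. \<bar>g x\<bar> \<le> C2"
  then show "(\<lambda>x. f x + g x) \<in> borel_measurable G" "\<exists>C. AE x in M. \<bar>f x + g x\<bar> \<le> C"
    by (auto intro!: exI[of _ "C1+C2"] elim!: eventually_elim2)
qed

lemma Linfty_mult: "Linfty M G f \<Longrightarrow> Linfty M G g \<Longrightarrow> Linfty M G (\<lambda>x. f x * g x)"
  unfolding Linfty_def
proof (elim conjE exE, intro conjI)
  fix C1 C2 assume "f \<in> borel_measurable G" "g \<in> borel_measurable G"
    "AE x in M. \<bar>f x\<bar> \<le> C1" "AE x in M. \<bar>g x\<bar> \<le> C2"
  then show "(\<lambda>x. f x * g x) \<in> borel_measurable G" "\<exists>C. AE x in M. \<bar>f x * g x\<bar> \<le> C"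
    by (auto intro!: exI[of _ "C1*C2"] elim!: eventually_elim2 simp: abs_mult mult_mono')
qed

lemma Linfty_const: "Linfty M G (\<lambda>x. c)"
  unfolding Linfty_def by auto

lemma Linfty_cmult: "Linfty M G f \<Longrightarrow> Linfty M G (\<lambda>x. c * f x)"
  using Linfty_mult[OF Linfty_const] by blast

lemma Linfty_minus: "Linfty M G f \<Longrightarrow> Linfty M G (\<lambda>x. - f x)"
  using Linfty_cmult[of M G f "-1"] by simp

lemma Linfty_diff: "Linfty M G f \<Longrightarrow> Linfty M G g \<Longrightarrow> Linfty M G (\<lambda>x. f x - g x)"
  using Linfty_add[OF _ Linfty_minus, of M G f g] by simp

lemma cont_bound:
  fixes h :: "real \<Rightarrow> real"
  assumes "continuous_on UNIV h"
  shows "\<exists>B. \<forall>y. \<bar>y\<bar> \<le> K \<longrightarrow> \<bar>h y\<bar> \<le> B"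
proof -
  have "compact (h ` {-K..K})"
    by (rule compact_continuous_image) (auto intro: continuous_on_subset[OF assms])
  then obtain B where "\<forall>z\<in>h ` {-K..K}. norm z \<le> B"
    using compact_imp_bounded bounded_iff by metis
  show ?thesis
  proof (intro exI[of _ B] allI impI)
    fix y :: real assume "\<bar>y\<bar> \<le> K"
    then have "y \<in> {-K..K}" by (auto simp: abs_le_iff)
    then show "\<bar>h y\<bar> \<le> B" using \<open>\<forall>z\<in>h ` {-K..K}. norm z \<le> B\<close> by auto
  qed
qed

lemma Linfty_comp:
  assumes "continuous_on UNIV h" "Linfty M G f"
  shows "Linfty M G (\<lambda>x. h (f x))"
proof -
  obtain K where f: "f \<in> borel_measurable G" "AE x in M. \<bar>f x\<bar> \<le> K"
    using assms(2) unfolding Linfty_def by blast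
  obtain B where B: "\<forall>y. \<bar>y\<bar> \<le> K \<longrightarrow> \<bar>h y\<bar> \<le> B" using cont_bound[OF assms(1)] by blast
  show ?thesis unfolding Linfty_def
    using borel_measurable_continuous_on[OF assms(1) f(1)] f(2) B
    by (auto intro!: exI[of _ B] elim!: eventually_mono)
qed

lemma Linfty_div:
  assumes "Linfty M G f" "g \<in> borel_measurable G" "AE x in M. g x \<ge> 1"
  shows "Linfty M G (\<lambda>x. f x / g x)"
proof -
  obtain K where f: "f \<in> borel_measurable G" "AE x in M. \<bar>f x\<bar> \<le> K"
    using assms(1) unfolding Linfty_def by blast
  have pw: "\<bar>f x / g x\<bar> \<le> K" if "\<bar>f x\<bar> \<le> K" "1 \<le> g x" for x
  proof -
    have "\<bar>f x\<bar> * 1 \<le> \<bar>f x\<bar> * g x" using \<open>1 \<le> g x\<close> by (rule mult_left_mono) auto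
    then have "\<bar>f x / g x\<bar> \<le> \<bar>f x\<bar>" using \<open>1 \<le> g x\<close> by (simp add: abs_div divide_le_eq)
    then show "\<bar>f x / g x\<bar> \<le> K" using \<open>\<bar>f x\<bar> \<le> K\<close> by linarith
  qed
  have "AE x in M. \<bar>f x / g x\<bar> \<le> K"
    by (rule eventually_elim2[OF f(2) assms(3)]) (rule pw)
  then show ?thesis unfolding Linfty_def using f(1) assms(2) by auto
qed

lemma Linfty_sub:
  assumes "subalgebra G' G" "Linfty M G f"
  shows "Linfty M G' f"
  using assms measurable_from_subalg unfolding Linfty_def by blast

lemma Linfty_integrable:
  assumes "prob_space M" "Linfty M M f"
  shows "integrable M f"
proof -
  interpret prob_space M by fact
  obtain K where f: "f \<in> borel_measurable M" "AE x in M. \<bar>f x\<bar> \<le> K"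
    using assms(2) unfolding Linfty_def by blast
  show ?thesis by (rule integrable_const_bound[of _ K]) (use f in auto)
qed

lemma tangent:
  fixes u u' :: "real \<Rightarrow> real"
  assumes conc: "strictly_concave_on UNIV u"
    and der: "\<And>y. (u has_real_derivative u' y) (at y)"
  shows "u y \<le> u x + u' x * (y - x)"
proof (rule ccontr)
  assume A: "\<not> ?thesis"
  have sc: "\<And>a b c. a \<noteq> b \<Longrightarrow> 0 < c \<Longrightarrow> c < 1 \<Longrightarrow> u (c * a + (1 - c) * b) > c * u a + (1 - c) * u b"
    using conc unfolding strictly_concave_on_def by blast
  consider "y > x" | "y < x" | "y = x" by linarith
  then show False
  proof cases
    case 1
    define k where "k = (u y - u x) / (y - x)"
    have "k > u' x" using A 1 unfolding k_def by (simp add: field_simps)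
    define \<psi> where "\<psi> z = u z - u x - k * (z - x)" for z
    have "DERIV \<psi> x :> u' x - k * 1" unfolding \<psi>_def
      by (auto intro!: derivative_eq_intros der)
    then obtain d where d: "d > 0" "\<And>h. h > 0 \<Longrightarrow> h < d \<Longrightarrow> \<psi> x > \<psi> (x + h)"
      using DERIV_neg_dec_right[OF \<open>DERIV \<psi> x :> u' x - k * 1\<close>] \<open>k > u' x\<close> by auto
    define h where "h = min (d/2) ((y - x)/2)"
    have h: "h > 0" "h < d" "h < y - x" using d 1 unfolding h_def by (auto simp: min_def)
    define c where "c = h / (y - x)"
    have c: "0 < c" "c < 1" using h 1 unfolding c_def by auto
    have cyx: "c * (y - x) = h" using 1 unfolding c_def by simp
    have "c * y + (1 - c) * x = x + c * (y - x)" by (simp add: algebra_simps)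
    with cyx have eq: "c * y + (1 - c) * x = x + h" by simp
    have "u (x + h) > c * u y + (1 - c) * u x" using sc[of y x c] c 1 eq by auto
    also have "c * u y + (1 - c) * u x = u x + c * (u y - u x)" by (simp add: algebra_simps)
    also have "c * (u y - u x) = k * h" unfolding c_def k_def by simp
    
    finally have "\<psi> (x + h) > 0" unfolding \<psi>_def by simp
    moreover have "\<psi> x = 0" unfolding \<psi>_def by simp
    ultimately show False using d(2)[OF h(1,2)] by simp
  next
    case 2
    define k where "k = (u x - u y) / (x - y)"
    have "k < u' x" using A 2 unfolding k_def by (simp add: field_simps)
    define \<psi> where "\<psi> z = u z - u x - k * (z - x)" for z
    have "DERIV \<psi> x :> u' x - k * 1" unfolding \<psi>_def
      by (auto intro!: derivative_eq_intros der)
    then obtain d where d: "d > 0" "\<And>h. h > 0 \<Longrightarrow> h < d \<Longrightarrow> \<psi> (x - h) < \<psi> x"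
      using DERIV_pos_inc_left[OF \<open>DERIV \<psi> x :> u' x - k * 1\<close>] \<open>k < u' x\<close> by auto
    define h where "h = min (d/2) ((x - y)/2)"
    have h: "h > 0" "h < d" "h < x - y" using d 2 unfolding h_def by (auto simp: min_def)
    define c where "c = h / (x - y)"
    have c: "0 < c" "c < 1" using h 2 unfolding c_def by auto
    have cyx: "c * (x - y) = h" using 2 unfolding c_def by simp
    have "c * y + (1 - c) * x = x - c * (x - y)" by (simp add: algebra_simps)
    with cyx have eq: "c * y + (1 - c) * x = x - h" by simp
    have "u (x - h) > c * u y + (1 - c) * u x" using sc[of y x c] c 2 eq by auto
    also have "c * u y + (1 - c) * u x = u x - c * (u x - u y)" by (simp add: algebra_simps)
    also have "c * (u x - u y) = k * h" unfolding c_def k_def by simp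
    
    finally have "\<psi> (x - h) > 0" unfolding \<psi>_def by simp
    moreover have "\<psi> x = 0" unfolding \<psi>_def by simp
    ultimately show False using d(2)[OF h(1,2)] by simp
  next
    case 3 then show False using A by simp
  qed
qed




locale setting =
  fixes M :: "'a measure" and F :: "nat \<Rightarrow> 'a measure" and T :: nat
    and r :: "nat \<Rightarrow> 'a \<Rightarrow> real" and u u' :: "nat \<Rightarrow> real \<Rightarrow> real"
  assumes prob: "prob_space M"
    and filt: "filtration_upto M F T"
    and r_pred: "\<forall>t\<in>{1..T}. r t \<in> borel_measurable (F (t - 1))"
    and r_bdd: "\<exists>C. \<forall>t\<in>{1..T}. AE x in M. \<bar>r t x\<bar> \<le> C"
    and r_nonneg: "\<forall>t\<in>{1..T}. AE x in M. r t x \<ge> 0"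
    and u_conc: "\<forall>t\<in>{1..T}. strictly_concave_on UNIV (u t)"
    and u_deriv: "\<forall>t\<in>{1..T}. \<forall>y. (u t has_real_derivative u' t y) (at y)"
    and u'_cont: "\<forall>t\<in>{1..T}. continuous_on UNIV (u' t)"
    and u'_pos: "\<forall>t\<in>{1..T}. \<forall>y. u' t y > 0"
begin

lemma subalg: "t \<le> T \<Longrightarrow> subalgebra M (F t)"
  using filt unfolding filtration_upto_def by auto

lemma subalg2: "s \<le> t \<Longrightarrow> t \<le> T \<Longrightarrow> subalgebra (F t) (F s)"
  using filt unfolding filtration_upto_def subalgebra_def by (metis order.trans)

lemma fms: "t \<le> T \<Longrightarrow> sigma_finite_subalgebra M (F t)"
  apply (rule finite_measure_subalgebra_is_sigma_finite)
  unfolding finite_measure_subalgebra_def finite_measure_subalgebra_axioms_def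
  using prob subalg prob_space.finite_measure by blast

lemma meas_M: "t \<le> T \<Longrightarrow> f \<in> borel_measurable (F t) \<Longrightarrow> f \<in> borel_measurable M"
  using measurable_from_subalg subalg by blast

lemma Linfty_M: "t \<le> T \<Longrightarrow> Linfty M (F t) f \<Longrightarrow> Linfty M M f"
  using Linfty_sub subalg by blast

lemma Linfty_mono: "s \<le> t \<Longrightarrow> t \<le> T \<Longrightarrow> Linfty M (F s) f \<Longrightarrow> Linfty M (F t) f"
  using Linfty_sub subalg2 by blast

lemma integ: "t \<le> T \<Longrightarrow> Linfty M (F t) f \<Longrightarrow> integrable M f"
  using Linfty_integrable[OF prob] Linfty_M by blast

lemma u_cont: "t \<in> {1..T} \<Longrightarrow> continuous_on UNIV (u t)"
  using u_deriv by (meson DERIV_isCont continuous_at_imp_continuous_on)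

lemma r_AE: "AE x in M. \<forall>k\<in>{1..T}. 0 \<le> r k x \<and> r k x \<le> C0" if "\<forall>t\<in>{1..T}. AE x in M. \<bar>r t x\<bar> \<le> C0"
proof (intro AE_finite_allI)
  fix k assume k: "k \<in> {1..T}"
  show "AE x in M. 0 \<le> r k x \<and> r k x \<le> C0"
    using that[rule_format, OF k] r_nonneg[rule_format, OF k] by eventually_elim auto
qed auto

lemma disc_meas: "t \<le> T \<Longrightarrow> disc r t \<in> borel_measurable (F t)"
proof -
  assume tT: "t \<le> T"
  have "r k \<in> borel_measurable (F t)" if "k \<in> {1..t}" for k
  proof -
    have "r k \<in> borel_measurable (F (k - 1))" using r_pred that tT by auto
    moreover have "k - 1 \<le> t" using that by auto
    ultimately show ?thesis using measurable_from_subalg[OF subalg2[OF _ tT]] by blast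
  qed
  then show ?thesis unfolding disc_def[abs_def] by measurable
qed

lemma disc_ge1: "AE x in M. \<forall>t\<le>T. disc r t x \<ge> 1"
proof -
  obtain C0 where "\<forall>t\<in>{1..T}. AE x in M. \<bar>r t x\<bar> \<le> C0" using r_bdd by blast
  from r_AE[OF this] show ?thesis
    by (rule eventually_mono) (auto simp: disc_def intro!: prod_ge_1)
qed

lemma disc_Linfty: "t \<le> T \<Longrightarrow> Linfty M (F t) (disc r t)"
proof -
  assume tT: "t \<le> T"
  obtain C0 where "\<forall>t\<in>{1..T}. AE x in M. \<bar>r t x\<bar> \<le> C0" using r_bdd by blast
  from r_AE[OF this] have "AE x in M. \<bar>disc r t x\<bar> \<le> (\<Prod>k\<in>{1..t}. 1 + C0)"
  proof (rule eventually_mono)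
    fix x assume A: "\<forall>k\<in>{1..T}. 0 \<le> r k x \<and> r k x \<le> C0"
    then have "disc r t x \<le> (\<Prod>k\<in>{1..t}. 1 + C0)" unfolding disc_def
      using tT by (intro prod_mono) auto
    moreover have "disc r t x \<ge> 0" unfolding disc_def using A tT by (intro prod_nonneg) auto
    ultimately show "\<bar>disc r t x\<bar> \<le> (\<Prod>k\<in>{1..t}. 1 + C0)" by simp
  qed
  then show ?thesis unfolding Linfty_def using disc_meas[OF tT] by blast
qed

lemma tilde_Linfty: "t \<le> T \<Longrightarrow> Linfty M (F t) f \<Longrightarrow> Linfty M (F t) (\<lambda>x. f x / disc r t x)"
  by (rule Linfty_div) (use disc_meas disc_ge1 in \<open>auto elim!: eventually_mono\<close>)

end




context setting begin

lemma suff: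
  assumes T1: "T \<ge> 1"
    and X: "X \<in> allocations M F T r W" and lam: "\<forall>t\<in>{1..T}. lam t > 0"
    and mart: "martingale_upto M F T (\<lambda>t x. lam t * u' t (X t x / disc r t x))"
  shows "pareto_optimal M F T r u W X"
  unfolding pareto_optimal_def
proof (intro conjI notI)
  show "X \<in> allocations M F T r W" by fact
  assume "\<exists>Y\<in>allocations M F T r W.
     (\<forall>t\<in>{1..T}. (\<integral>x. u t (X t x / disc r t x) \<partial>M) \<le> (\<integral>x. u t (Y t x / disc r t x) \<partial>M)) \<and>
     (\<exists>t0\<in>{1..T}. (\<integral>x. u t0 (X t0 x / disc r t0 x) \<partial>M) < (\<integral>x. u t0 (Y t0 x / disc r t0 x) \<partial>M))"
  then obtain Y t0 where Y: "Y \<in> allocations M F T r W"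
    and dom: "\<forall>t\<in>{1..T}. (\<integral>x. u t (X t x / disc r t x) \<partial>M) \<le> (\<integral>x. u t (Y t x / disc r t x) \<partial>M)"
    and t0: "t0 \<in> {1..T}" "(\<integral>x. u t0 (X t0 x / disc r t0 x) \<partial>M) < (\<integral>x. u t0 (Y t0 x / disc r t0 x) \<partial>M)"
    by blast
  define G where "G t x = X t x / disc r t x" for t x
  define H where "H t x = Y t x / disc r t x" for t x
  define Z where "Z t x = lam t * u' t (G t x)" for t x
  have LG: "Linfty M (F t) (G t)" if "t \<in> {1..T}" for t
    unfolding G_def[abs_def] using X that by (intro tilde_Linfty) (auto simp: allocations_def)
  have LH: "Linfty M (F t) (H t)" if "t \<in> {1..T}" for t
    unfolding H_def[abs_def] using Y that by (intro tilde_Linfty) (auto simp: allocations_def)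
  have LZ: "Linfty M (F t) (Z t)" if "t \<in> {1..T}" for t
    unfolding Z_def[abs_def] using that u'_cont by (intro Linfty_cmult Linfty_comp[OF _ LG]) auto
  have TT: "T \<in> {1..T}" using T1 by auto
  have key: "lam t * ((\<integral>x. u t (H t x) \<partial>M) - (\<integral>x. u t (G t x) \<partial>M))
      \<le> (\<integral>x. (H t x - G t x) * Z T x \<partial>M)" if t: "t \<in> {1..T}" for t
  proof -
    have tT: "t \<le> T" using t by auto
    have iH: "integrable M (\<lambda>x. u t (H t x))"
      using integ[OF tT Linfty_comp[OF u_cont[OF t] LH[OF t]]] .
    have iG: "integrable M (\<lambda>x. u t (G t x))"
      using integ[OF tT Linfty_comp[OF u_cont[OF t] LG[OF t]]] .
    have LD: "Linfty M (F t) (\<lambda>x. H t x - G t x)" using LH[OF t] LG[OF t] by (rule Linfty_diff)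
    have iD: "integrable M (\<lambda>x. u' t (G t x) * (H t x - G t x))"
      using integ[OF tT Linfty_mult[OF Linfty_comp[OF _ LG[OF t]] LD]] u'_cont t by auto
    have "(\<integral>x. u t (H t x) \<partial>M) - (\<integral>x. u t (G t x) \<partial>M) = (\<integral>x. u t (H t x) - u t (G t x) \<partial>M)"
      using iH iG by simp
    also have "\<dots> \<le> (\<integral>x. u' t (G t x) * (H t x - G t x) \<partial>M)"
    proof (rule integral_mono)
      show "integrable M (\<lambda>x. u t (H t x) - u t (G t x))" using iH iG by simp
      show "integrable M (\<lambda>x. u' t (G t x) * (H t x - G t x))" by fact
      fix x show "u t (H t x) - u t (G t x) \<le> u' t (G t x) * (H t x - G t x)"
        using tangent[of "u t" "u' t" "H t x" "G t x"] u_conc u_deriv t by auto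
    qed
    finally have 1: "lam t * ((\<integral>x. u t (H t x) \<partial>M) - (\<integral>x. u t (G t x) \<partial>M))
       \<le> lam t * (\<integral>x. u' t (G t x) * (H t x - G t x) \<partial>M)"
      using lam t by (intro mult_left_mono) (auto intro: less_imp_le)
    also have "\<dots> = (\<integral>x. (H t x - G t x) * Z t x \<partial>M)"
      unfolding Z_def by (simp add: mult_ac)
    also have "\<dots> = (\<integral>x. (H t x - G t x) * real_cond_exp M (F t) (Z T) x \<partial>M)"
    proof (rule integral_cong_AE)
      show "(\<lambda>x. (H t x - G t x) * Z t x) \<in> borel_measurable M"
        using Linfty_M[OF tT Linfty_mult[OF LD LZ[OF t]]] unfolding Linfty_def by auto
      have "(\<lambda>x. H t x - G t x) \<in> borel_measurable M"
        using Linfty_M[OF tT LD] unfolding Linfty_def by auto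
      then show "(\<lambda>x. (H t x - G t x) * real_cond_exp M (F t) (Z T) x) \<in> borel_measurable M"
        using borel_measurable_cond_exp2
        by (rule borel_measurable_times)
      have "AE x in M. real_cond_exp M (F t) (Z T) x = Z t x"
        using mart t tT unfolding martingale_upto_def Z_def G_def by auto
      then show "AE x in M. (H t x - G t x) * Z t x = (H t x - G t x) * real_cond_exp M (F t) (Z T) x"
        by eventually_elim simp
    qed
    also have "\<dots> = (\<integral>x. (H t x - G t x) * Z T x \<partial>M)"
    proof (rule sigma_finite_subalgebra.real_cond_exp_intg(2)[OF fms[OF tT]])
      show "integrable M (\<lambda>x. (H t x - G t x) * Z T x)"
        using Linfty_integrable[OF prob Linfty_mult[OF Linfty_M[OF tT LD] Linfty_M[OF order.refl LZ[OF TT]]]] by simp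
      show "(\<lambda>x. H t x - G t x) \<in> borel_measurable (F t)" using LD unfolding Linfty_def by auto
      show "Z T \<in> borel_measurable M" using LZ[OF TT] meas_M[of T] unfolding Linfty_def by auto
    qed
    finally show ?thesis .
  qed
  have "(\<Sum>t\<in>{1..T}. lam t * ((\<integral>x. u t (H t x) \<partial>M) - (\<integral>x. u t (G t x) \<partial>M)))
      \<le> (\<Sum>t\<in>{1..T}. (\<integral>x. (H t x - G t x) * Z T x \<partial>M))"
    using key by (rule sum_mono)
  also have "\<dots> = (\<integral>x. (\<Sum>t\<in>{1..T}. (H t x - G t x) * Z T x) \<partial>M)"
  proof (rule Bochner_Integration.integral_sum[where f="\<lambda>t x. (H t x - G t x) * Z T x", symmetric])
    fix t assume t: "t \<in> {1..T}"
    then have tT: "t \<le> T" by auto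
    show "integrable M (\<lambda>x. (H t x - G t x) * Z T x)"
      using Linfty_integrable[OF prob Linfty_mult[OF Linfty_M[OF tT Linfty_diff[OF LH[OF t] LG[OF t]]] Linfty_M[OF order.refl LZ[OF TT]]]] by simp
  qed
  also have "\<dots> = (\<integral>x. 0 \<partial>M)"
  proof (rule integral_cong_AE)
    show "(\<lambda>x. \<Sum>t\<in>{1..T}. (H t x - G t x) * Z T x) \<in> borel_measurable M"
    proof (rule borel_measurable_sum)
      fix t assume t: "t \<in> {1..T}"
      then have tT: "t \<le> T" by auto
      show "(\<lambda>x. (H t x - G t x) * Z T x) \<in> borel_measurable M"
        using Linfty_mult[OF Linfty_M[OF tT Linfty_diff[OF LH[OF t] LG[OF t]]] Linfty_M[OF order.refl LZ[OF TT]]]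
        unfolding Linfty_def by auto
    qed
    show "(\<lambda>x. 0) \<in> borel_measurable M" by simp
    have "AE x in M. (\<Sum>t\<in>{1..T}. Y t x / disc r t x) = W x"
      "AE x in M. (\<Sum>t\<in>{1..T}. X t x / disc r t x) = W x"
      using X Y unfolding allocations_def by auto
    then show "AE x in M. (\<Sum>t\<in>{1..T}. (H t x - G t x) * Z T x) = 0"
      by eventually_elim (simp add: H_def G_def sum_distrib_right[symmetric] sum_subtractf)
  qed
  also have "\<dots> = 0" by simp
  finally have le: "(\<Sum>t\<in>{1..T}. lam t * ((\<integral>x. u t (H t x) \<partial>M) - (\<integral>x. u t (G t x) \<partial>M))) \<le> 0" .
  have "0 < (\<Sum>t\<in>{1..T}. lam t * ((\<integral>x. u t (H t x) \<partial>M) - (\<integral>x. u t (G t x) \<partial>M)))"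
  proof (rule sum_pos2[OF _ t0(1)])
    show "0 < lam t0 * ((\<integral>x. u t0 (H t0 x) \<partial>M) - (\<integral>x. u t0 (G t0 x) \<partial>M))"
      using lam t0 unfolding H_def G_def by auto
    fix t assume t: "t \<in> {1..T}"
    have "0 < lam t" using lam t by auto
    moreover have "0 \<le> (\<integral>x. u t (H t x) \<partial>M) - (\<integral>x. u t (G t x) \<partial>M)"
      using dom t unfolding H_def G_def by auto
    ultimately show "0 \<le> lam t * ((\<integral>x. u t (H t x) \<partial>M) - (\<integral>x. u t (G t x) \<partial>M))"
      by simp
  qed simp
  with le show False by simp
qed

end



lemma lim_improve:
  fixes v v' :: "real \<Rightarrow> real"
  assumes prob: "prob_space M" and Lg: "Linfty M M g" and LZ: "Linfty M M Z"
    and conc: "strictly_concave_on UNIV v" and der: "\<And>y. (v has_real_derivative v' y) (at y)"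
    and cont: "continuous_on UNIV v'"
    and pos: "0 < (\<integral>x. Z x * v' (g x) \<partial>M)"
  shows "eventually (\<lambda>n. (\<integral>x. v (g x + Z x / real (Suc n)) \<partial>M) > (\<integral>x. v (g x) \<partial>M)) sequentially"
proof -
  obtain Kg where g: "g \<in> borel_measurable M" "AE x in M. \<bar>g x\<bar> \<le> Kg"
    using Lg unfolding Linfty_def by blast
  obtain Kz where Z: "Z \<in> borel_measurable M" "AE x in M. \<bar>Z x\<bar> \<le> Kz"
    using LZ unfolding Linfty_def by blast
  obtain B where B: "\<And>y. \<bar>y\<bar> \<le> Kg + Kz \<Longrightarrow> \<bar>v' y\<bar> \<le> B"
    using cont_bound[OF cont, of "Kg + Kz"] by blast
  have vc: "continuous_on UNIV v"
    using der by (meson DERIV_isCont continuous_at_imp_continuous_on)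
  define s where "s n x = Z x * v' (g x + Z x / real (Suc n))" for n x
  have Lpert: "Linfty M M (\<lambda>x. g x + Z x / real (Suc n))" for n
    using Linfty_add[OF Lg Linfty_mult[OF LZ Linfty_const[of M M "1 / real (Suc n)"]]] by simp
  have sm: "s n \<in> borel_measurable M" for n
    using Linfty_mult[OF LZ Linfty_comp[OF cont Lpert[of n]]] unfolding Linfty_def s_def[abs_def] by auto
  have fm: "(\<lambda>x. Z x * v' (g x)) \<in> borel_measurable M"
    using Linfty_mult[OF LZ Linfty_comp[OF cont Lg]] unfolding Linfty_def by auto
  have lim: "AE x in M. (\<lambda>n. s n x) \<longlonglongrightarrow> Z x * v' (g x)"
  proof (rule AE_I2)
    fix x
    have "(\<lambda>n. Z x / real (Suc n)) \<longlonglongrightarrow> 0"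
      using LIMSEQ_Suc[OF lim_const_over_n[of "Z x"]] by simp
    then have "(\<lambda>n. g x + Z x / real (Suc n)) \<longlonglongrightarrow> g x + 0"
      by (intro tendsto_add tendsto_const)
    then have "(\<lambda>n. v' (g x + Z x / real (Suc n))) \<longlonglongrightarrow> v' (g x)"
      using isCont_tendsto_compose[of "g x" v'] cont by (simp add: continuous_on_eq_continuous_at)
    then show "(\<lambda>n. s n x) \<longlonglongrightarrow> Z x * v' (g x)" unfolding s_def by (intro tendsto_mult tendsto_const)
  qed
  have bound: "AE x in M. norm (s n x) \<le> Kz * B" for n
    using g(2) Z(2)
  proof (eventually_elim)
    case (elim x)
    have "\<bar>Z x\<bar> * 1 \<le> \<bar>Z x\<bar> * (1 + real n)" by (rule mult_left_mono) auto
    then have "\<bar>Z x / real (Suc n)\<bar> \<le> \<bar>Z x\<bar>" by (simp add: abs_div divide_le_eq)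
    then have "\<bar>g x + Z x / real (Suc n)\<bar> \<le> Kg + Kz" using elim by linarith
    then have "\<bar>v' (g x + Z x / real (Suc n))\<bar> \<le> B" by (rule B)
    then show ?case unfolding s_def using elim by (simp add: abs_mult mult_mono')
  qed
  have "(\<lambda>n. \<integral>x. s n x \<partial>M) \<longlonglongrightarrow> (\<integral>x. Z x * v' (g x) \<partial>M)"
    by (rule integral_dominated_convergence[OF fm sm _ lim bound])
      (use prob prob_space.finite_measure finite_measure.integrable_const in blast)
  then have ev: "eventually (\<lambda>n. (\<integral>x. s n x \<partial>M) > 0) sequentially"
    using pos by (rule order_tendstoD(1))
  then show ?thesis
  proof (rule eventually_mono)
    fix n assume sp: "(\<integral>x. s n x \<partial>M) > 0"
    have i1: "integrable M (\<lambda>x. v (g x + Z x / real (Suc n)))"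
      using Linfty_integrable[OF prob Linfty_comp[OF vc Lpert]] .
    have i0: "integrable M (\<lambda>x. v (g x))"
      using Linfty_integrable[OF prob Linfty_comp[OF vc Lg]] .
    have isn: "integrable M (s n)"
      using Linfty_integrable[OF prob Linfty_mult[OF LZ Linfty_comp[OF cont Lpert[of n]]]]
      unfolding s_def[abs_def] .
    have "0 < (\<integral>x. s n x \<partial>M) / real (Suc n)" using sp by simp
    also have "\<dots> = (\<integral>x. s n x / real (Suc n) \<partial>M)" by simp
    also have "\<dots> \<le> (\<integral>x. v (g x + Z x / real (Suc n)) - v (g x) \<partial>M)"
    proof (rule integral_mono)
      show "integrable M (\<lambda>x. s n x / real (Suc n))" using isn by simp
      show "integrable M (\<lambda>x. v (g x + Z x / real (Suc n)) - v (g x))" using i1 i0 by simp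
      fix x
      have "v (g x) \<le> v (g x + Z x / real (Suc n)) + v' (g x + Z x / real (Suc n)) * (g x - (g x + Z x / real (Suc n)))"
        by (rule tangent[OF conc der])
      then show "s n x / real (Suc n) \<le> v (g x + Z x / real (Suc n)) - v (g x)"
        unfolding s_def by (simp add: algebra_simps)
    qed
    also have "\<dots> = (\<integral>x. v (g x + Z x / real (Suc n)) \<partial>M) - (\<integral>x. v (g x) \<partial>M)"
      using i1 i0 by simp
    finally show "(\<integral>x. v (g x + Z x / real (Suc n)) \<partial>M) > (\<integral>x. v (g x) \<partial>M)" by simp
  qed
qed




context setting begin

lemma key_transfer:
  assumes po: "pareto_optimal M F T r u W X"
    and s: "s \<in> {1..T}" and t: "t \<in> {1..T}" and st: "s < t"
    and LZ: "Linfty M (F s) Zf"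
    and ps: "0 < (\<integral>x. Zf x * u' s (X s x / disc r s x) \<partial>M)"
    and pt: "(\<integral>x. Zf x * u' t (X t x / disc r t x) \<partial>M) < 0"
  shows False
proof -
  define G where "G k x = X k x / disc r k x" for k x
  have X: "X \<in> allocations M F T r W" using po unfolding pareto_optimal_def by blast
  have sT: "s \<le> T" and tT: "t \<le> T" using s t by auto
  have LX: "Linfty M (F k) (X k)" if "k \<in> {1..T}" for k using X that unfolding allocations_def by auto
  have LG: "Linfty M (F k) (G k)" if "k \<in> {1..T}" for k
    unfolding G_def[abs_def] using LX[OF that] that by (intro tilde_Linfty) auto
  have LZt: "Linfty M (F t) Zf" using Linfty_mono[OF _ tT LZ] st by auto
  have e1: "eventually (\<lambda>n. (\<integral>x. u s (G s x + Zf x / real (Suc n)) \<partial>M) > (\<integral>x. u s (G s x) \<partial>M)) sequentially"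
    by (rule lim_improve[OF prob Linfty_M[OF sT LG[OF s]] Linfty_M[OF sT LZ]])
       (use u_conc u_deriv u'_cont s ps in \<open>auto simp: G_def\<close>)
  have e2: "eventually (\<lambda>n. (\<integral>x. u t (G t x + (- Zf x) / real (Suc n)) \<partial>M) > (\<integral>x. u t (G t x) \<partial>M)) sequentially"
  proof (rule lim_improve[OF prob Linfty_M[OF tT LG[OF t]] Linfty_M[OF tT Linfty_minus[OF LZt]]])
    show "0 < (\<integral>x. - Zf x * u' t (G t x) \<partial>M)" using pt by (simp add: G_def)
  qed (use u_conc u_deriv u'_cont t in auto)
  obtain n where n1: "(\<integral>x. u s (G s x + Zf x / real (Suc n)) \<partial>M) > (\<integral>x. u s (G s x) \<partial>M)"
    and n2: "(\<integral>x. u t (G t x + (- Zf x) / real (Suc n)) \<partial>M) > (\<integral>x. u t (G t x) \<partial>M)"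
    using eventually_conj[OF e1 e2] eventually_sequentially by auto
  define Y where "Y k x = (if k = s then X s x + disc r s x * Zf x / real (Suc n)
     else if k = t then X t x - disc r t x * Zf x / real (Suc n) else X k x)" for k x
  have LY: "Linfty M (F k) (Y k)" if k: "k \<in> {1..T}" for k
  proof -
    have kT: "k \<le> T" using k by auto
    consider "k = s" | "k = t" | "k \<noteq> s" "k \<noteq> t" by blast
    then show ?thesis
    proof cases
      case 1
      have "Linfty M (F s) (\<lambda>x. X s x + disc r s x * Zf x * (1 / real (Suc n)))"
        by (intro Linfty_add LX[OF s] Linfty_mult disc_Linfty sT LZ Linfty_const)
      then show ?thesis using 1 st unfolding Y_def[abs_def] by simp
    next
      case 2
      have "Linfty M (F t) (\<lambda>x. X t x - disc r t x * Zf x * (1 / real (Suc n)))"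
        by (intro Linfty_diff LX[OF t] Linfty_mult disc_Linfty tT LZt Linfty_const)
      then show ?thesis using 2 st unfolding Y_def[abs_def] by simp
    qed (use LX[OF k] in \<open>simp add: Y_def[abs_def]\<close>)
  qed
  have Ydiv: "AE x in M. \<forall>k\<in>{1..T}. Y k x / disc r k x = G k x +
       (if k = s then Zf x / real (Suc n) else if k = t then - Zf x / real (Suc n) else 0)"
    using disc_ge1
  proof eventually_elim
    case (elim x)
    show ?case
    proof
      fix k assume "k \<in> {1..T}"
      then have "disc r k x \<ge> 1" using elim by auto
      then have "disc r k x \<noteq> 0" by auto
      then show "Y k x / disc r k x = G k x +
       (if k = s then Zf x / real (Suc n) else if k = t then - Zf x / real (Suc n) else 0)"
        unfolding Y_def G_def using st by (auto simp: field_simps)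
    qed
  qed
  have YA: "Y \<in> allocations M F T r W"
    unfolding allocations_def
  proof (intro CollectI conjI ballI)
    show "\<And>k. k \<in> {1..T} \<Longrightarrow> Linfty M (F k) (Y k)" by (rule LY)
    have "AE x in M. (\<Sum>k\<in>{1..T}. X k x / disc r k x) = W x"
      using X unfolding allocations_def by auto
    then show "AE x in M. (\<Sum>k\<in>{1..T}. Y k x / disc r k x) = W x"
      using Ydiv
    proof eventually_elim
      case (elim x)
      have "(\<Sum>k\<in>{1..T}. Y k x / disc r k x) = (\<Sum>k\<in>{1..T}. G k x +
         ((if k = s then Zf x / real (Suc n) else 0) + (if k = t then - Zf x / real (Suc n) else 0)))"
        using elim(2) st by (intro sum.cong) auto
      also have "\<dots> = (\<Sum>k\<in>{1..T}. G k x) + (Zf x / real (Suc n) + - Zf x / real (Suc n))"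
        using s t by (simp add: sum.distrib)
      also have "\<dots> = W x" using elim(1) by (simp add: G_def)
      finally show ?case .
    qed
  qed
  have intY: "(\<integral>x. u k (Y k x / disc r k x) \<partial>M) = (\<integral>x. u k (G k x +
       (if k = s then Zf x / real (Suc n) else if k = t then - Zf x / real (Suc n) else 0)) \<partial>M)"
    if k: "k \<in> {1..T}" for k
  proof (rule integral_cong_AE)
    have kT: "k \<le> T" using k by auto
    show "(\<lambda>x. u k (Y k x / disc r k x)) \<in> borel_measurable M"
      using Linfty_M[OF kT Linfty_comp[OF u_cont[OF k] tilde_Linfty[OF kT LY[OF k]]]]
      unfolding Linfty_def by auto
    have "Linfty M M (\<lambda>x. G k x + (if k = s then Zf x / real (Suc n) else if k = t then - Zf x / real (Suc n) else 0))"
    proof -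
      have "Linfty M M (\<lambda>x. G k x + Zf x * c)" for c
        by (intro Linfty_add Linfty_M[OF kT LG[OF k]] Linfty_mult Linfty_M[OF sT LZ] Linfty_const)
      from this[of "1 / real (Suc n)"] this[of "- 1 / real (Suc n)"] this[of 0] show ?thesis
        by (cases "k = s"; cases "k = t") (simp_all add: mult_ac)
    qed
    then show "(\<lambda>x. u k (G k x + (if k = s then Zf x / real (Suc n) else if k = t then - Zf x / real (Suc n) else 0))) \<in> borel_measurable M"
      using Linfty_comp[OF u_cont[OF k]] unfolding Linfty_def by blast
    show "AE x in M. u k (Y k x / disc r k x) = u k (G k x +
       (if k = s then Zf x / real (Suc n) else if k = t then - Zf x / real (Suc n) else 0))"
      using Ydiv by eventually_elim (use k in auto)
  qed
  have "\<exists>Y\<in>allocations M F T r W.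
          (\<forall>k\<in>{1..T}. (\<integral>x. u k (Y k x / disc r k x) \<partial>M) \<ge> (\<integral>x. u k (X k x / disc r k x) \<partial>M)) \<and>
          (\<exists>t0\<in>{1..T}. (\<integral>x. u t0 (Y t0 x / disc r t0 x) \<partial>M) > (\<integral>x. u t0 (X t0 x / disc r t0 x) \<partial>M))"
  proof (intro bexI[OF _ YA] conjI ballI bexI[OF _ s])
    fix k assume k: "k \<in> {1..T}"
    show "(\<integral>x. u k (Y k x / disc r k x) \<partial>M) \<ge> (\<integral>x. u k (X k x / disc r k x) \<partial>M)"
      using intY[OF k] n1 n2 st by (cases "k = s"; cases "k = t") (simp_all add: G_def)
  next
    show "(\<integral>x. u s (Y s x / disc r s x) \<partial>M) > (\<integral>x. u s (X s x / disc r s x) \<partial>M)"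
      using intY[OF s] n1 by (auto simp: G_def)
  qed
  then show False using po unfolding pareto_optimal_def by blast
qed

end



context setting begin

lemma nec:
  assumes po: "pareto_optimal M F T r u W X"
  shows "\<exists>lam :: nat \<Rightarrow> real. (\<forall>t\<in>{1..T}. lam t > 0) \<and>
       martingale_upto M F T (\<lambda>t x. lam t * u' t (X t x / disc r t x))"
proof -
  interpret P: prob_space M by (rule prob)
  define G where "G k x = X k x / disc r k x" for k x
  have X: "X \<in> allocations M F T r W" using po unfolding pareto_optimal_def by blast
  have LX: "Linfty M (F k) (X k)" if "k \<in> {1..T}" for k using X that unfolding allocations_def by auto
  have LG: "Linfty M (F k) (G k)" if "k \<in> {1..T}" for k
    unfolding G_def[abs_def] using LX[OF that] that by (intro tilde_Linfty) auto
  have LU: "Linfty M (F k) (\<lambda>x. u' k (G k x))" if "k \<in> {1..T}" for k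
    using Linfty_comp[OF _ LG[OF that]] u'_cont that by auto
  define a where "a k = (\<integral>x. u' k (G k x) \<partial>M)" for k
  have apos: "a k > 0" if k: "k \<in> {1..T}" for k
  proof -
    have kT: "k \<le> T" using k by auto
    have int: "integrable M (\<lambda>x. u' k (G k x))" using integ[OF kT LU[OF k]] .
    have nn: "AE x in M. 0 \<le> u' k (G k x)" using u'_pos k by (intro AE_I2) (auto intro: less_imp_le)
    have "a k \<ge> 0" unfolding a_def using nn by (rule integral_nonneg_AE)
    moreover have "a k \<noteq> 0"
    proof
      assume "a k = 0"
      then have "AE x in M. u' k (G k x) = 0"
        using integral_nonneg_eq_0_iff_AE[OF int nn] unfolding a_def by simp
      then have "AE x in M. False"
      proof (rule eventually_mono)
        fix x assume "u' k (G k x) = 0"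
        moreover have "u' k (G k x) > 0" using u'_pos k by auto
        ultimately show False by simp
      qed
      then show False using P.AE_False by simp
    qed
    ultimately show ?thesis by simp
  qed
  define b where "b k A = (\<integral>x. indicator A x * u' k (G k x) \<partial>M)" for k A
  have Lind: "Linfty M (F s) (indicator A :: 'a \<Rightarrow> real)" if "A \<in> sets (F s)" for s A
    unfolding Linfty_def using that
    by (auto intro!: exI[of _ 1] AE_I2 borel_measurable_indicator split: split_indicator)
  have EQ: "b t A / a t = b s A / a s"
    if s: "s \<in> {1..T}" and t: "t \<in> {1..T}" and st: "s < t" and A: "A \<in> sets (F s)" for s t A
  proof (rule ccontr)
    assume ne: "b t A / a t \<noteq> b s A / a s"
    have as: "a s > 0" and at: "a t > 0" using apos s t by auto
    define D where "D = b s A * a t - b t A * a s"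
    have D: "D \<noteq> 0"
    proof
      assume "D = 0"
      then have "b t A / a t = b s A / a s" using as at unfolding D_def by (simp add: field_simps)
      with ne show False by simp
    qed
    define \<alpha> where "\<alpha> = (a t + a s) / D"
    define \<beta> where "\<beta> = - (b t A + b s A) / D"
    define Zf where "Zf x = \<alpha> * indicator A x + \<beta>" for x
    have LZ: "Linfty M (F s) Zf"
      unfolding Zf_def[abs_def] by (intro Linfty_add Linfty_cmult Lind A Linfty_const)
    have comp: "(\<integral>x. Zf x * u' k (G k x) \<partial>M) = \<alpha> * b k A + \<beta> * a k" if k: "k \<in> {1..T}" for k
    proof -
      have kT: "k \<le> T" using k by auto
      have AM: "A \<in> sets M" using A subalg[of s] s unfolding subalgebra_def by auto
      have i1: "integrable M (\<lambda>x. indicator A x * u' k (G k x))"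
        using integrable_mult_indicator[OF AM integ[OF kT LU[OF k]]] by simp
      have i2: "integrable M (\<lambda>x. u' k (G k x))" using integ[OF kT LU[OF k]] .
      have "(\<integral>x. Zf x * u' k (G k x) \<partial>M) = (\<integral>x. \<alpha> * (indicator A x * u' k (G k x)) + \<beta> * u' k (G k x) \<partial>M)"
        unfolding Zf_def by (rule Bochner_Integration.integral_cong) (auto simp: algebra_simps)
      also have "\<dots> = \<alpha> * b k A + \<beta> * a k"
        using i1 i2 unfolding a_def b_def by simp
      finally show ?thesis .
    qed
    have "\<alpha> * b s A + \<beta> * a s = ((a t + a s) * b s A - (b t A + b s A) * a s) / D"
      unfolding \<alpha>_def \<beta>_def using D by (simp add: field_simps)
    also have "(a t + a s) * b s A - (b t A + b s A) * a s = D" unfolding D_def by (simp add: algebra_simps)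
    finally have "\<alpha> * b s A + \<beta> * a s = 1" using D by simp
    then have ps: "0 < (\<integral>x. Zf x * u' s (X s x / disc r s x) \<partial>M)" using comp[OF s] by (simp add: G_def)
    have "\<alpha> * b t A + \<beta> * a t = ((a t + a s) * b t A - (b t A + b s A) * a t) / D"
      unfolding \<alpha>_def \<beta>_def using D by (simp add: field_simps)
    also have "(a t + a s) * b t A - (b t A + b s A) * a t = - D" unfolding D_def by (simp add: algebra_simps)
    finally have "\<alpha> * b t A + \<beta> * a t = -1" using D by simp
    then have pt: "(\<integral>x. Zf x * u' t (X t x / disc r t x) \<partial>M) < 0" using comp[OF t] by (simp add: G_def)
    show False by (rule key_transfer[OF po s t st LZ ps pt])
  qed
  define lam where "lam k = 1 / a k" for k
  define Zm where "Zm k x = lam k * u' k (G k x)" for k x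
  have LZm: "Linfty M (F k) (Zm k)" if "k \<in> {1..T}" for k
    unfolding Zm_def[abs_def] by (rule Linfty_cmult[OF LU[OF that]])
  have mart: "martingale_upto M F T Zm"
    unfolding martingale_upto_def
  proof (intro conjI ballI impI)
    fix k assume k: "k \<in> {1..T}"
    show "integrable M (Zm k)" using integ LZm[OF k] k by auto
    show "Zm k \<in> borel_measurable (F k)" using LZm[OF k] unfolding Linfty_def by auto
  next
    fix s t assume s: "s \<in> {1..T}" and t: "t \<in> {1..T}" and st: "s \<le> t"
    have sT: "s \<le> T" and tT: "t \<le> T" using s t by auto
    interpret S: sigma_finite_subalgebra M "F s" by (rule fms[OF sT])
    have iZt: "integrable M (Zm t)" using integ LZm[OF t] tT by auto
    have iZs: "integrable M (Zm s)" using integ LZm[OF s] sT by auto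
    have mZs: "Zm s \<in> borel_measurable (F s)" using LZm[OF s] unfolding Linfty_def by auto
    show "AE x in M. real_cond_exp M (F s) (Zm t) x = Zm s x"
    proof (cases "s = t")
      case True
      then show ?thesis using S.real_cond_exp_F_meas[OF iZs mZs] by simp
    next
      case False
      with st have st': "s < t" by simp
      show ?thesis
      proof (rule S.real_cond_exp_charact[OF _ iZt iZs mZs])
        fix A assume A: "A \<in> sets (F s)"
        have "(\<integral>x\<in>A. Zm k x \<partial>M) = b k A / a k" for k
          unfolding set_lebesgue_integral_def Zm_def lam_def b_def
          by (simp add: mult_ac)
        then show "(\<integral>x\<in>A. Zm t x \<partial>M) = (\<integral>x\<in>A. Zm s x \<partial>M)"
          using EQ[OF s t st' A] by simp
      qed
    qed
  qed
  have "(\<lambda>t x. lam t * u' t (X t x / disc r t x)) = Zm"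
    by (simp add: Zm_def G_def fun_eq_iff)
  moreover have "\<forall>t\<in>{1..T}. lam t > 0" using apos unfolding lam_def by auto
  ultimately show ?thesis using mart by auto
qed

end


theorem theorem2p14:
  fixes M :: "'a measure" and F :: "nat \<Rightarrow> 'a measure" and T :: nat
    and r :: "nat \<Rightarrow> 'a \<Rightarrow> real"
    and u u' :: "nat \<Rightarrow> real \<Rightarrow> real"
    and W :: "'a \<Rightarrow> real" and X :: "nat \<Rightarrow> 'a \<Rightarrow> real"
  assumes "prob_space M"
    and "T \<ge> 1"
    and "filtration_upto M F T"
    and r_pred: "\<forall>t\<in>{1..T}. r t \<in> borel_measurable (F (t - 1))"
    and r_bdd: "\<exists>C. \<forall>t\<in>{1..T}. AE x in M. \<bar>r t x\<bar> \<le> C"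
    and r_nonneg: "\<forall>t\<in>{1..T}. AE x in M. r t x \<ge> 0"
    and u_conc: "\<forall>t\<in>{1..T}. strictly_concave_on UNIV (u t)"
    and u_deriv: "\<forall>t\<in>{1..T}. \<forall>y. (u t has_real_derivative u' t y) (at y)"
    and u'_cont: "\<forall>t\<in>{1..T}. continuous_on UNIV (u' t)"
    and u'_pos: "\<forall>t\<in>{1..T}. \<forall>y. u' t y > 0"
    and W: "Linfty M (F T) W"
    and X: "X \<in> allocations M F T r W"
  shows "pareto_optimal M F T r u W X \<longleftrightarrow>
    (\<exists>lam :: nat \<Rightarrow> real. (\<forall>t\<in>{1..T}. lam t > 0) \<and>
       martingale_upto M F T (\<lambda>t x. lam t * u' t (X t x / disc r t x)))"
proof -
  have S: "setting M F T r u u'" unfolding setting_def using assms by auto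
  show ?thesis using setting.suff[OF S assms(2) X] setting.nec[OF S] by blast
qed

end
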